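(* For all integers $L,M\ge 0$, $$\sum_{i,j\in\mathbb Z}(-1)^{i}q^{(i+j)^2}\begin{bmatrix}2L\\ L-i\end{bmatrix}_{q^2}\begin{bmatrix}2M\\ M-j\end{bmatrix}_{q^2}=(-1)^M\frac{(q;q^2)_{L-M}}{(-q;q^2)_{L-M}}\,(q^2;q^4)_L\,(q^2;q^4)_M.$$
   Context: $q$ is complex with $|q|<1$. The $q$-shifted factorial is defined for all integers $n$ by $(a;q)_0=1$, $(a;q)_n=\prod_{j=0}^{n-1}(1-aq^j)$ for $n>0$, and $(a;q)_n=\prod_{j=1}^{-n}\frac{1}{1-aq^{-j}}$ for $n<0$; $(q)_n:=(q;q)_n$. The Gaussian binomial is $\begin{bmatrix}n+m\\ n\end{bmatrix}_q=\frac{(q)_{n+m}}{(q)_n(q)_m}$ if $n,m$ are nonnegative integers and $0$ otherwise (so the sum is finite). *)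

theory Defs
  imports "HOL-Analysis.Analysis"
begin

definition qpoch :: "complex \<Rightarrow> complex \<Rightarrow> int \<Rightarrow> complex" where
  "qpoch a q n =
     (if n \<ge> 0 then (\<Prod>j<nat n. 1 - a * q ^ j)
      else (\<Prod>j\<in>{1..nat (-n)}. 1 / (1 - a * q powi (- int j))))"

definition gauss_binom :: "complex \<Rightarrow> int \<Rightarrow> int \<Rightarrow> complex" where
  "gauss_binom q N K =
     (if 0 \<le> K \<and> 0 \<le> N - K
      then qpoch q q N / (qpoch q q K * qpoch q q (N - K)) else 0)"

end

theory Submission
  imports Defs "HOL-Computational_Algebra.Formal_Power_Series"
begin

definition poch :: "complex \<Rightarrow> complex \<Rightarrow> nat \<Rightarrow> complex" where
  "poch a p n = (\<Prod>j<n. 1 - a * p^j)"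

definition qb :: "complex \<Rightarrow> nat \<Rightarrow> nat \<Rightarrow> complex" where
  "qb p n k = (if k \<le> n then poch p p n / (poch p p k * poch p p (n-k)) else 0)"

lemma poch_0[simp]: "poch a p 0 = 1" by (simp add: poch_def)
lemma poch_Suc: "poch a p (Suc n) = poch a p n * (1 - a * p^n)"
  by (simp add: poch_def)

lemma poch_add: "poch a p (m+n) = poch a p m * poch (a*p^m) p n"
  by (induction n) (simp_all add: poch_Suc power_add mult.assoc)

lemma poch_Suc_left: "poch a p (Suc n) = (1 - a) * poch (a*p) p n"
  using poch_add[of a p 1 n] by (simp add: poch_Suc)

lemma poch_nz: assumes "norm a < 1" "norm p \<le> 1" shows "poch a p n \<noteq> 0"
proof -
  have "1 - a * p^j \<noteq> 0" for j
  proof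
    assume "1 - a * p^j = 0"
    hence "norm (a * p^j) = 1" by (metis eq_iff_diff_eq_0 norm_one)
    moreover have "norm (a * p^j) < 1"
    proof -
      have "norm (p^j) \<le> 1" by (simp add: norm_power power_le_one assms)
      hence "norm a * norm (p^j) \<le> norm a"
        by (simp add: mult_left_le)
      thus ?thesis using assms by (simp add: norm_mult)
    qed
    ultimately show False by simp
  qed
  thus ?thesis by (simp add: poch_def)
qed

lemma poch_pp_nz: "norm p < 1 \<Longrightarrow> poch p p n \<noteq> 0"
  by (rule poch_nz) auto

lemma qb_0[simp]: "norm p < 1 \<Longrightarrow> qb p n 0 = 1"
  using poch_pp_nz[of p n] by (simp add: qb_def)

lemma qb_gt[simp]: "n < k \<Longrightarrow> qb p n k = 0"
  by (simp add: qb_def)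

lemma aux:
  fixes A B C x y :: complex
  assumes "B \<noteq> 0" "C \<noteq> 0" "1 - x \<noteq> 0" "1 - y \<noteq> 0"
  shows "A * (1 - x*y) / (B * (1 - x) * (C * (1 - y))) = A / (B * (C * (1 - y))) + x * (A / (B * (1 - x) * C))"
proof -
  have "A / (B * (C * (1 - y))) = A * (1 - x) / (B * (1 - x) * (C * (1 - y)))" using assms by (simp add: ac_simps)
  moreover have "x * (A / (B * (1 - x) * C)) = A * (x * (1 - y)) / (B * (1 - x) * (C * (1 - y)))" using assms by (simp add: ac_simps)
  ultimately show ?thesis by (simp add: add_divide_distrib[symmetric] algebra_simps)
qed

lemma qb_pascal:
  assumes p: "norm p < 1"
  shows "qb p (Suc n) (Suc k) = qb p n k + p^(Suc k) * qb p n (Suc k)"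
proof (cases "k < n")
  case True
  then obtain d where d: "n = Suc k + d" using less_imp_Suc_add by fastforce
  have nz: "poch p p m \<noteq> 0" for m using poch_pp_nz[OF p] .
  define A where "A = poch p p n" define B where "B = poch p p k" define C where "C = poch p p d"
  define x where "x = p^(Suc k)" define y where "y = p^(Suc d)"
  have s1: "poch p p (Suc n) = A * (1 - x*y)"
  proof -
    have "p^(Suc n) = x * y" unfolding x_def y_def d by (simp add: power_add)
    thus ?thesis unfolding A_def by (simp add: poch_Suc)
  qed
  have s2: "poch p p (Suc k) = B * (1 - x)" unfolding B_def x_def by (simp add: poch_Suc)
  have s3: "poch p p (Suc d) = C * (1 - y)" unfolding C_def y_def by (simp add: poch_Suc)
  have k1: "1 - x \<noteq> 0" using s2 nz[of "Suc k"] by auto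
  have d1: "1 - y \<noteq> 0" using s3 nz[of "Suc d"] by auto
  have "B \<noteq> 0" "C \<noteq> 0" using nz B_def C_def by auto
  hence eq: "A * (1 - x*y) / (B * (1 - x) * (C * (1 - y))) = A / (B * (C * (1 - y))) + x * (A / (B * (1 - x) * C))"
    using k1 d1 by (rule aux)
  have e1: "qb p (Suc n) (Suc k) = A * (1 - x*y) / (B * (1 - x) * (C * (1 - y)))"
  proof -
    have "Suc n - Suc k = Suc d" using d by simp
    thus ?thesis using True by (simp add: qb_def s1 s2 s3 del: diff_Suc_Suc)
  qed
  have e2: "qb p n k = A / (B * (C * (1 - y)))"
  proof -
    have "n - k = Suc d" using d by simp
    thus ?thesis using True by (simp add: qb_def s3 A_def[symmetric] B_def[symmetric])
  qed
  have e3: "qb p n (Suc k) = A / (B * (1 - x) * C)"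
  proof -
    have "n - Suc k = d" using d by simp
    thus ?thesis using True by (simp add: qb_def s2 A_def[symmetric] C_def[symmetric])
  qed
  show ?thesis using eq unfolding e1 e2 e3 x_def .
next
  case False
  show ?thesis
  proof (cases "k = n")
    case True
    thus ?thesis using poch_pp_nz[OF p] by (simp add: qb_def)
  next
    case False
    with \<open>\<not> k < n\<close> show ?thesis by (simp add: qb_def)
  qed
qed

lemma qbinomial:
  fixes q x :: complex
  assumes "norm q < 1"
  shows "poch x (q^2) n = (\<Sum>k\<le>n. qb (q^2) n k * (-1)^k * q^(k*(k-1)) * x^k)"
proof (induction n arbitrary: x)
  case 0
  have "norm (q^2) < 1" using assms by (simp add: norm_power power_less_one_iff)
  thus ?case by simp
next
  case (Suc n)
  define p where "p = q^2"
  have p: "norm p < 1" using assms by (simp add: p_def norm_power power_less_one_iff)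
  define s where "s = (\<lambda>k. (-1)^k * q^(k*(k-1)) * x^k)"
  define T where "T = (\<lambda>k. qb p n k * p^k * s k)"
  have IH: "poch (x*p) p n = (\<Sum>k\<le>n. T k)"
    unfolding Suc[of "x*p", folded p_def] T_def s_def
    by (rule sum.cong) (simp_all add: power_mult_distrib p_def)
  have sS: "s (Suc k) = - (x * p^k * s k)" for k
  proof -
    have "Suc k * (Suc k - 1) = k*(k-1) + 2*k" by (cases k) (simp_all add: algebra_simps)
    hence "q^(Suc k * (Suc k - 1)) = q^(k*(k-1)) * q^(2*k)" by (metis power_add)
    also have "q^(2*k) = p^k" by (simp add: p_def power_mult)
    finally have "q^(Suc k * (Suc k - 1)) = q^(k*(k-1)) * p^k" .
    thus ?thesis by (simp add: s_def)
  qed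
  have "poch x p (Suc n) = (1 - x) * (\<Sum>k\<le>n. T k)" by (simp add: poch_Suc_left IH)
  also have "\<dots> = (\<Sum>k\<le>n. T k) + (\<Sum>k\<le>n. qb p n k * s (Suc k))"
    by (simp add: algebra_simps sum_distrib_left sum_subtractf T_def sS sum_negf)
  also have "(\<Sum>k\<le>n. T k) = T 0 + (\<Sum>k\<le>n. T (Suc k))"
  proof -
    have "(\<Sum>k\<le>Suc n. T k) = T 0 + (\<Sum>k\<le>n. T (Suc k))" by (rule sum.atMost_Suc_shift)
    moreover have "T (Suc n) = 0" by (simp add: T_def)
    ultimately show ?thesis by simp
  qed
  also have "T 0 + (\<Sum>k\<le>n. T (Suc k)) + (\<Sum>k\<le>n. qb p n k * s (Suc k))
      = qb p (Suc n) 0 * s 0 + (\<Sum>k\<le>n. qb p (Suc n) (Suc k) * s (Suc k))"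
  proof -
    have "(\<Sum>k\<le>n. qb p (Suc n) (Suc k) * s (Suc k))
        = (\<Sum>k\<le>n. qb p n k * s (Suc k)) + (\<Sum>k\<le>n. T (Suc k))"
      unfolding sum.distrib[symmetric] T_def
      by (rule sum.cong) (simp_all add: qb_pascal[OF p] algebra_simps)
    moreover have "T 0 = qb p (Suc n) 0 * s 0" using p by (simp add: T_def)
    ultimately show ?thesis by simp
  qed
  also have "\<dots> = (\<Sum>k\<le>Suc n. qb p (Suc n) k * s k)"
    by (rule sum.atMost_Suc_shift[symmetric])
  finally show ?case by (simp add: p_def s_def mult.assoc)
qed

lemma poch_neg_part:
  fixes q :: complex assumes "q \<noteq> 0"
  shows "q^(N^2) * poch (-q/q^(2*N)) (q^2) N = poch (-q) (q^2) N"
proof (induction N)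
  case 0 then show ?case by simp
next
  case (Suc N)
  have a: "(-q/q^(2*Suc N)) * q^2 = -q/q^(2*N)" using assms by (simp add: field_simps power_add power2_eq_square)
  have "Suc N ^2 = (2*N+1) + N^2" by (simp add: power2_eq_square)
  hence "q^(Suc N ^2) = q^(2*N+1) * q^(N^2)" by (metis power_add)
  moreover have "(1 - (-q/q^(2*Suc N))) * q^(2*N+1) = 1 + q^(2*N+1)"
    using assms by (simp add: field_simps power_add)
  ultimately have "q^(Suc N ^2) * poch (-q/q^(2*Suc N)) (q^2) (Suc N)
     = (1 + q^(2*N+1)) * (q^(N^2) * poch (-q/q^(2*N)) (q^2) N)"
    unfolding poch_Suc_left a by (simp add: mult_ac)
  also have "\<dots> = poch (-q) (q^2) (Suc N)"
    unfolding Suc poch_Suc by (simp add: power_mult[symmetric] mult_ac)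
  finally show ?case .
qed

lemma jtp:
  fixes q :: complex
  assumes q: "norm q < 1" "q \<noteq> 0" and NM: "N \<le> 2*M"
  shows "(\<Sum>l\<le>2*M. qb (q^2) (2*M) l * q ^ nat ((int N - int l)^2))
       = poch (-q) (q^2) N * poch (-q) (q^2) (2*M - N)"
proof -
  define p where "p = q^2"
  define x where "x = -q/q^(2*N)"
  have tm: "q ^ nat ((int N - int l)^2) = q^(N^2) * ((-1)^l * q^(l*(l-1)) * x^l)" for l
  proof -
    have e: "nat ((int N - int l)^2) + 2*N*l = N^2 + l*(l-1) + l"
    proof -
      have h1: "int (nat ((int N - int l)^2)) = (int N - int l)^2" by simp
      have h2: "l*(l-1) + l = l*l" by (cases l) auto
      have "int (nat ((int N - int l)^2) + 2*N*l) = int (N^2 + l*l)"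
        using h1 by (simp add: power2_eq_square algebra_simps)
      hence "nat ((int N - int l)^2) + 2*N*l = N^2 + l*l" by (simp only: of_nat_eq_iff)
      thus ?thesis using h2 by simp
    qed
    have "q ^ nat ((int N - int l)^2) * q^(2*N*l) = q^(N^2) * q^(l*(l-1)) * q^l"
      by (metis e power_add)
    hence A: "q ^ nat ((int N - int l)^2) = q^(N^2) * q^(l*(l-1)) * q^l / q^(2*N*l)"
      using q(2) by (simp add: eq_divide_eq)
    have "(-1)^l * x^l = ((-1) * x)^l" by (simp only: power_mult_distrib)
    also have "(-1) * x = q / q^(2*N)" by (simp add: x_def)
    also have "(q / q^(2*N))^l = q^l / q^(2*N*l)" by (simp add: power_divide power_mult)
    finally have "(-1)^l * x^l = q^l / q^(2*N*l)" .
    hence "q^(N^2) * ((-1)^l * q^(l*(l-1)) * x^l) = q^(N^2) * q^(l*(l-1)) * (q^l / q^(2*N*l))"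
      by (metis (no_types, lifting) mult.assoc mult.left_commute)
    thus ?thesis unfolding A by simp
  qed
  have "(\<Sum>l\<le>2*M. qb p (2*M) l * q ^ nat ((int N - int l)^2))
      = q^(N^2) * (\<Sum>l\<le>2*M. qb p (2*M) l * (-1)^l * q^(l*(l-1)) * x^l)"
    by (simp add: tm sum_distrib_left mult_ac)
  also have "\<dots> = q^(N^2) * poch x p (2*M)" using qbinomial[OF q(1)] by (simp add: p_def)
  also have "poch x p (2*M) = poch x p N * poch (x*p^N) p (2*M - N)"
    using poch_add[of x p N "2*M-N"] NM by simp
  also have "x*p^N = -q" using q by (simp add: x_def p_def power_mult)
  finally show ?thesis using poch_neg_part[OF q(2), of N] by (simp add: p_def x_def mult_ac)
qed

definition Sc :: "complex \<Rightarrow> complex fps \<Rightarrow> complex fps" where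
  "Sc s G = Abs_fps (\<lambda>n. s^n * fps_nth G n)"

lemma Sc_nth[simp]: "fps_nth (Sc s G) n = s^n * fps_nth G n" by (simp add: Sc_def)

lemma Sc_mult: "Sc s (G*H) = Sc s G * Sc s H"
proof (rule fps_ext)
  fix n
  have "fps_nth (Sc s (G*H)) n = (\<Sum>i=0..n. s^n * (fps_nth G i * fps_nth H (n-i)))" by (simp add: fps_mult_nth sum_distrib_left)
  also have "\<dots> = (\<Sum>i=0..n. (s^i * fps_nth G i) * (s^(n-i) * fps_nth H (n-i)))"
  proof (rule sum.cong)
    fix i assume "i \<in> {0..n}"
    hence "s^n = s^i * s^(n-i)" by (simp add: power_add[symmetric])
    thus "s^n * (fps_nth G i * fps_nth H (n-i)) = (s^i * fps_nth G i) * (s^(n-i) * fps_nth H (n-i))" by (simp add: mult_ac)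
  qed simp
  also have "\<dots> = fps_nth (Sc s G * Sc s H) n" by (simp add: fps_mult_nth)
  finally show "fps_nth (Sc s (G*H)) n = fps_nth (Sc s G * Sc s H) n" .
qed

lemma Sc_add: "Sc s (G+H) = Sc s G + Sc s H" by (rule fps_ext) (simp add: algebra_simps)
lemma Sc_diff: "Sc s (G-H) = Sc s G - Sc s H" by (rule fps_ext) (simp add: algebra_simps)
lemma Sc_one: "Sc s 1 = 1" by (rule fps_ext) simp
lemma Sc_X: "Sc s fps_X = fps_const s * fps_X" by (rule fps_ext) (auto simp: le_Suc_eq)
lemma Sc_fconst: "Sc s (fps_const c) = fps_const c" by (rule fps_ext) simp
lemma Sc_const: "Sc s (fps_const c * G) = fps_const c * Sc s G" by (rule fps_ext) (simp add: mult_ac)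
lemma Sc_Sc: "Sc s (Sc t G) = Sc (s*t) G" by (rule fps_ext) (simp add: power_mult_distrib mult_ac)

lemma H_rec:
  fixes p c :: complex
  assumes p: "norm p < 1"
  defines "a \<equiv> (\<lambda>k. poch c p k / poch p p k)"
  defines "h \<equiv> (\<lambda>n. \<Sum>i=0..n. (-1)^i * a i * a (n-i))"
  shows "h (Suc (Suc n)) - h n = p^(Suc (Suc n)) * h (Suc (Suc n)) - c^2 * p^n * h n"
    and "h 1 = p * h 1"
proof -
  define F where "F = Abs_fps a"
  define Fm where "Fm = Sc (-1) F"
  have nz: "poch p p k \<noteq> 0" for k using poch_pp_nz[OF p] .
  have E1: "(1 - fps_X) * F = (1 - fps_const c * fps_X) * Sc p F"
  proof (rule fps_ext)
    fix n
    show "fps_nth ((1 - fps_X) * F) n = fps_nth ((1 - fps_const c * fps_X) * Sc p F) n"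
    proof (cases n)
      case 0 thus ?thesis by (simp add: algebra_simps)
    next
      case (Suc m)
      have "a (Suc m) * (1 - p^(Suc m)) = a m * (1 - c * p^m)"
        using nz[of m] nz[of "Suc m"] by (simp add: a_def poch_Suc)
      thus ?thesis using Suc by (simp add: algebra_simps F_def)
    qed
  qed
  have E2: "(1 + fps_X) * Fm = (1 + fps_const c * fps_X) * Sc p Fm"
  proof -
    have "Sc (-1) ((1 - fps_X) * F) = Sc (-1) ((1 - fps_const c * fps_X) * Sc p F)" using E1 by simp
    hence "(1 - fps_const (-1) * fps_X) * Fm = (1 - fps_const c * (fps_const (-1) * fps_X)) * Sc p Fm"
      unfolding Fm_def Sc_mult Sc_diff Sc_one Sc_X Sc_fconst Sc_Sc by (simp add: mult.commute)
    moreover have "fps_const (-1) = (-1 :: complex fps)" by (rule fps_ext) simp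
    ultimately show ?thesis by simp
  qed
  define H where "H = Fm * F"
  have "(1 - fps_X*fps_X) * H = ((1 + fps_X) * Fm) * ((1 - fps_X) * F)"
    by (simp add: H_def algebra_simps)
  also have "\<dots> = ((1 + fps_const c * fps_X) * Sc p Fm) * ((1 - fps_const c * fps_X) * Sc p F)"
    by (simp add: E1 E2)
  also have "\<dots> = (1 - fps_const (c^2) * fps_X * fps_X) * Sc p H"
    by (simp add: H_def Sc_mult algebra_simps power2_eq_square flip: fps_const_mult)
  finally have E3: "H - fps_X * (fps_X * H) = Sc p H - fps_const (c^2) * (fps_X * (fps_X * Sc p H))"
    by (simp add: algebra_simps)
  have Hn: "fps_nth H n = h n" for n
    unfolding H_def fps_mult_nth by (simp add: Fm_def F_def h_def mult_ac)
  have "fps_nth (H - fps_X * (fps_X * H)) (Suc (Suc n)) = fps_nth (Sc p H - fps_const (c^2) * (fps_X * (fps_X * Sc p H))) (Suc (Suc n))"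
    using E3 by simp
  thus "h (Suc (Suc n)) - h n = p^(Suc (Suc n)) * h (Suc (Suc n)) - c^2 * p^n * h n"
    by (simp add: Hn mult_ac)
  have "fps_nth (H - fps_X * (fps_X * H)) 1 = fps_nth (Sc p H - fps_const (c^2) * (fps_X * (fps_X * Sc p H))) 1"
    using E3 by simp
  thus "h 1 = p * h 1" by (simp add: Hn)
qed

lemma phi:
  fixes p c :: complex
  assumes p: "norm p < 1"
  shows "(\<Sum>k\<le>2*K. (-1)^k * qb p (2*K) k * poch c p k * poch c p (2*K-k))
         = poch (c^2) (p^2) K * poch p (p^2) K"
proof -
  define a where "a = (\<lambda>k. poch c p k / poch p p k)"
  define h where "h = (\<lambda>n. \<Sum>i=0..n. (-1)^i * a i * a (n-i))"
  define Phi where "Phi = (\<lambda>n. \<Sum>k\<le>n. (-1)^k * qb p n k * poch c p k * poch c p (n-k))"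
  have nz: "poch p p k \<noteq> 0" for k using poch_pp_nz[OF p] .
  have Ph: "Phi n = poch p p n * h n" for n
  proof -
    have "Phi n = (\<Sum>i=0..n. poch p p n * ((-1)^i * a i * a (n-i)))"
      unfolding Phi_def atMost_atLeast0
    proof (rule sum.cong)
      fix i assume "i \<in> {0..n}"
      thus "(-1)^i * qb p n i * poch c p i * poch c p (n-i) = poch p p n * ((-1)^i * a i * a (n-i))"
        using nz[of i] nz[of "n-i"] by (simp add: qb_def a_def)
    qed simp
    thus ?thesis by (simp add: h_def sum_distrib_left)
  qed
  have rec: "Phi (Suc (Suc n)) = (1 - p^(Suc n)) * (1 - c^2 * p^n) * Phi n" for n
  proof -
    have r: "(1 - p^(Suc (Suc n))) * h (Suc (Suc n)) = (1 - c^2 * p^n) * h n"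
    proof -
      have "h (Suc (Suc n)) - h n = p^(Suc (Suc n)) * h (Suc (Suc n)) - c^2 * p^n * h n"
        unfolding h_def a_def by (rule H_rec(1)[OF p])
      thus ?thesis by (simp add: algebra_simps)
    qed
    have "Phi (Suc (Suc n)) = poch p p n * (1 - p^(Suc n)) * ((1 - p^(Suc (Suc n))) * h (Suc (Suc n)))"
      by (simp add: Ph poch_Suc mult_ac)
    thus ?thesis unfolding r by (simp add: Ph mult_ac)
  qed
  have "Phi (2*K) = poch (c^2) (p^2) K * poch p (p^2) K"
  proof (induction K)
    case 0 thus ?case using p by (simp add: Phi_def)
  next
    case (Suc K)
    have "Phi (2 * Suc K) = Phi (Suc (Suc (2*K)))" by simp
    also have "\<dots> = (1 - p^(Suc (2*K))) * (1 - c^2 * p^(2*K)) * Phi (2*K)" by (rule rec)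
    also have "\<dots> = poch (c^2) (p^2) (Suc K) * poch p (p^2) (Suc K)"
    proof -
      have "(p^2)^K = p^(2*K)" by (simp add: power_mult)
      thus ?thesis unfolding Suc poch_Suc by (simp add: mult_ac)
    qed
    finally show ?case .
  qed
  thus ?thesis by (simp add: Phi_def)
qed

lemma qpoch_nat: "qpoch a p (int n) = poch a p n"
  by (simp add: qpoch_def poch_def)

lemma gb_nat: "k \<le> n \<Longrightarrow> gauss_binom p (int n) (int k) = qb p n k"
  by (simp add: gauss_binom_def qb_def qpoch_nat of_nat_diff[symmetric] del: of_nat_diff)

lemma poch_sq: "poch (a^2) (p^2) n = poch a p n * poch (-a) p n"
  by (induction n) (simp_all add: poch_Suc power2_eq_square power_mult_distrib algebra_simps)

lemma neg1_powi: "(-1::complex) powi (int a - int b) = (-1)^a * (-1)^b"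
proof -
  have "(-1::complex) powi (int a - int b) = (-1)^a / (-1)^b" by (simp add: power_int_diff)
  also have "\<dots> = (-1)^a * (-1)^b" by (simp add: minus_one_power_iff)
  finally show ?thesis .
qed

lemma neg1_diff: "b \<le> a \<Longrightarrow> (-1::complex)^(a-b) = (-1)^a * (-1)^b"
  using neg1_powi[of a b] by (simp add: of_nat_diff[symmetric] del: of_nat_diff)

lemma neg1_sq: "(-1::complex)^nat((int a - int b)^2) = (-1)^a * (-1)^b"
proof -
  have "even (nat ((int a - int b)^2)) \<longleftrightarrow> even (int a - int b)"
    by (simp add: even_nat_iff)
  also have "\<dots> \<longleftrightarrow> even (a + b)" by presburger
  finally show ?thesis by (simp add: minus_one_power_iff power_add[symmetric])
qed

lemma qpoch_neg: "qpoch a p (- int n) = (\<Prod>j\<in>{1..n}. 1 / (1 - a * p powi (- int j)))"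
  by (cases "n = 0") (simp_all add: qpoch_def)

lemma negratio:
  fixes q :: complex
  assumes q: "norm q < 1" "q \<noteq> 0"
  shows "qpoch q (q^2) (- int n) / qpoch (-q) (q^2) (- int n)
       = (-1)^n * (poch (-q) (q^2) n / poch q (q^2) n)"
proof -
  have t: "(1 / (1 - q * (q^2) powi (- int (Suc m)))) / (1 / (1 - (-q) * (q^2) powi (- int (Suc m))))
        = - ((1 - (-q) * (q^2)^m) / (1 - q * (q^2)^m))" for m
  proof -
    define r where "r = q^(2*m+1)"
    have r0: "r \<noteq> 0" using q by (simp add: r_def)
    have "norm q ^ (2*m+1) < 1" using q(1) by (subst power_less_one_iff) auto
    hence "norm r < 1" unfolding r_def by (simp only: norm_power)
    hence r1: "1 - r \<noteq> 0" "r - 1 \<noteq> 0" by auto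
    have r1': "1 - 1/r \<noteq> 0" using r0 r1 by (simp add: field_simps)
    have a: "q * (q^2) powi (- int (Suc m)) = 1 / r"
    proof -
      have f1: "(q^2) powi (- int (Suc m)) = inverse ((q^2)^(Suc m))" by (simp only: power_int_minus power_int_of_nat)
      have f2: "(q^2)^(Suc m) = q * r" by (simp add: r_def power_mult[symmetric] power_add[symmetric])
      have "q * (q^2) powi (- int (Suc m)) = q * inverse (q * r)" unfolding f1 f2 by (rule refl)
      also have "\<dots> = 1 / r" using q r0 by (simp add: field_simps)
      finally show ?thesis .
    qed
    have b: "q * (q^2)^m = r" by (simp add: r_def power_mult[symmetric] power_add[symmetric] mult.commute)
    have "(1 / (1 - 1/r)) / (1 / (1 + 1/r)) = - ((1 + r) / (1 - r))"
      using r0 r1 r1' by (simp add: field_simps)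
    thus ?thesis using a b by simp
  qed
  have "qpoch q (q^2) (- int n) / qpoch (-q) (q^2) (- int n)
      = (\<Prod>j\<in>{1..n}. (1 / (1 - q * (q^2) powi (- int j))) / (1 / (1 - (-q) * (q^2) powi (- int j))))"
    by (simp add: qpoch_neg prod_dividef)
  also have "\<dots> = (\<Prod>m<n. - ((1 - (-q) * (q^2)^m) / (1 - q * (q^2)^m)))"
    using prod.atLeast1_atMost_eq[of "\<lambda>j. (1 / (1 - q * (q^2) powi (- int j))) / (1 / (1 - (-q) * (q^2) powi (- int j)))" n]
    by (simp only: t One_nat_def)
  also have "\<dots> = (-1)^n * (poch (-q) (q^2) n / poch q (q^2) n)"
  proof -
    define X where "X = (\<lambda>m::nat. 1 - (-q) * (q^2)^m)"
    define Y where "Y = (\<lambda>m::nat. 1 - q * (q^2)^m)"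
    have "(\<Prod>m<n. - (X m / Y m)) = (\<Prod>m<n. (-1) * (X m / Y m))" by simp
    also have "\<dots> = (\<Prod>m<n. (-1::complex)) * (\<Prod>m<n. X m / Y m)" by (rule prod.distrib)
    also have "\<dots> = (-1)^n * ((\<Prod>m<n. X m) / (\<Prod>m<n. Y m))" by (simp add: prod_dividef)
    finally show ?thesis unfolding X_def Y_def poch_def .
  qed
  finally show ?thesis .
qed

lemma reindex_int:
  "(\<Sum>i\<in>{- int L..int L}. g i) = (\<Sum>k\<le>2*L. g (int L - int k))"
proof -
  have "bij_betw (\<lambda>k. int L - int k) {..2*L} {- int L..int L}"
    by (rule bij_betw_byWitness[where f' = "\<lambda>i. nat (int L - i)"]) auto
  from sum.reindex_bij_betw[OF this, of g] show ?thesis by simp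
qed

lemma gb2: "k \<le> 2*n \<Longrightarrow> gauss_binom p (2 * int n) (int k) = qb p (2*n) k"
  using gb_nat[of k "2*n" p] by simp

lemma gb_zero: "i \<notin> {- int L..int L} \<Longrightarrow> gauss_binom p (2 * int L) (int L - i) = 0"
  by (auto simp: gauss_binom_def)

lemma gb_nz: "gauss_binom p (2 * int L) (int L - i) \<noteq> 0 \<Longrightarrow> - int L \<le> i \<and> i \<le> int L"
  using gb_zero[of i L p] by auto

lemma jtp_neg:
  fixes q :: complex
  assumes q: "norm q < 1" "q \<noteq> 0" and NL: "N \<le> 2*L"
  shows "(\<Sum>k\<le>2*L. (-1)^k * qb (q^2) (2*L) k * q ^ nat ((int N - int k)^2))
       = (-1)^N * (poch q (q^2) N * poch q (q^2) (2*L - N))"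
proof -
  have q': "norm (-q) < 1" "-q \<noteq> 0" using q by auto
  have "(\<Sum>k\<le>2*L. qb (q^2) (2*L) k * (-q) ^ nat ((int N - int k)^2))
      = (-1)^N * (\<Sum>k\<le>2*L. (-1)^k * qb (q^2) (2*L) k * q ^ nat ((int N - int k)^2))"
    unfolding sum_distrib_left
    by (rule sum.cong) (simp_all add: power_minus' neg1_sq mult_ac)
  moreover have "(\<Sum>k\<le>2*L. qb (q^2) (2*L) k * (-q) ^ nat ((int N - int k)^2))
      = poch q (q^2) N * poch q (q^2) (2*L - N)"
    using jtp[OF q' NL] by simp
  ultimately have "(-1)^N * (\<Sum>k\<le>2*L. (-1)^k * qb (q^2) (2*L) k * q ^ nat ((int N - int k)^2))
      = poch q (q^2) N * poch q (q^2) (2*L - N)" by simp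
  hence "(-1)^N * ((-1)^N * (\<Sum>k\<le>2*L. (-1)^k * qb (q^2) (2*L) k * q ^ nat ((int N - int k)^2)))
      = (-1)^N * (poch q (q^2) N * poch q (q^2) (2*L - N))" by simp
  moreover have "(-1::complex)^N * (-1)^N = 1" by (simp add: power_add[symmetric])
  ultimately show ?thesis by (simp add: mult.assoc[symmetric])
qed

lemma case1:
  fixes q :: complex
  assumes q: "norm q < 1" "q \<noteq> 0" and LM: "L \<le> M"
  shows "(\<Sum>k\<le>2*L. \<Sum>l\<le>2*M. (-1)^L * (-1)^k * q ^ nat ((int L - int k + (int M - int l))^2)
            * qb (q^2) (2*L) k * qb (q^2) (2*M) l)
       = (-1)^M * (qpoch q (q^2) (int L - int M) / qpoch (-q) (q^2) (int L - int M))
         * poch (q^2) ((q^2)^2) L * poch (q^2) ((q^2)^2) M"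
proof -
  define p where "p = q^2"
  define n where "n = M - L"
  define A where "A = poch (-q) p"
  define B where "B = poch q p"
  define c where "c = -q * p^n"
  have pn: "norm p < 1" using q by (simp add: p_def norm_power power_less_one_iff)
  have Aadd: "A (n + r) = A n * poch c p r" for r by (simp add: A_def c_def poch_add)
  have Badd: "B (n + r) = B n * poch (-c) p r" for r by (simp add: B_def c_def poch_add)
  have Bnz: "B n \<noteq> 0" unfolding B_def by (rule poch_nz) (use q pn in auto)
  have "(\<Sum>k\<le>2*L. \<Sum>l\<le>2*M. (-1)^L * (-1)^k * q ^ nat ((int L - int k + (int M - int l))^2)
            * qb p (2*L) k * qb p (2*M) l)
      = (\<Sum>k\<le>2*L. (-1)^L * (-1)^k * qb p (2*L) k *
           (\<Sum>l\<le>2*M. qb p (2*M) l * q ^ nat ((int (L+M-k) - int l)^2)))"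
  proof (intro sum.cong refl)
    fix k assume k: "k \<in> {..2*L}"
    have e: "int L - int k + (int M - int l) = int (L+M-k) - int l" for l using k LM by auto
    show "(\<Sum>l\<le>2*M. (-1)^L * (-1)^k * q ^ nat ((int L - int k + (int M - int l))^2)
            * qb p (2*L) k * qb p (2*M) l)
        = (-1)^L * (-1)^k * qb p (2*L) k * (\<Sum>l\<le>2*M. qb p (2*M) l * q ^ nat ((int (L+M-k) - int l)^2))"
      unfolding e sum_distrib_left by (rule sum.cong) (simp_all add: mult_ac)
  qed
  also have "\<dots> = (\<Sum>k\<le>2*L. (-1)^L * (-1)^k * qb p (2*L) k * (A (L+M-k) * A (2*M - (L+M-k))))"
  proof (intro sum.cong refl)
    fix k assume k: "k \<in> {..2*L}"
    have "L+M-k \<le> 2*M" using LM by auto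
    from jtp[OF q this] show "(-1)^L * (-1)^k * qb p (2*L) k * (\<Sum>l\<le>2*M. qb p (2*M) l * q ^ nat ((int (L+M-k) - int l)^2))
        = (-1)^L * (-1)^k * qb p (2*L) k * (A (L+M-k) * A (2*M - (L+M-k)))"
      by (simp add: p_def A_def)
  qed
  also have "\<dots> = (-1)^L * (A n)^2 * (\<Sum>k\<le>2*L. (-1)^k * qb p (2*L) k * poch c p k * poch c p (2*L-k))"
    unfolding sum_distrib_left
  proof (intro sum.cong refl)
    fix k assume k: "k \<in> {..2*L}"
    have "L+M-k = n + (2*L-k)" "2*M - (L+M-k) = n + k" using k LM by (auto simp: n_def)
    thus "(-1)^L * (-1)^k * qb p (2*L) k * (A (L+M-k) * A (2*M - (L+M-k)))
        = (-1)^L * (A n)^2 * ((-1)^k * qb p (2*L) k * poch c p k * poch c p (2*L-k))"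
      by (simp add: Aadd power2_eq_square mult_ac)
  qed
  also have "\<dots> = (-1)^L * (A n)^2 * (poch (c^2) (p^2) L * poch p (p^2) L)"
    using phi[OF pn] by simp
  finally have LHS: "(\<Sum>k\<le>2*L. \<Sum>l\<le>2*M. (-1)^L * (-1)^k * q ^ nat ((int L - int k + (int M - int l))^2)
            * qb p (2*L) k * qb p (2*M) l) = (-1)^L * (A n)^2 * (poch (c^2) (p^2) L * poch p (p^2) L)" .
  have ilm: "int L - int M = - int n" using LM by (simp add: n_def)
  have rat: "qpoch q (q^2) (int L - int M) / qpoch (-q) (q^2) (int L - int M) = (-1)^n * (A n / B n)"
    unfolding ilm using negratio[OF q, of n] by (simp add: A_def B_def p_def)
  have AM: "A M = A n * poch c p L" and BM: "B M = B n * poch (-c) p L"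
    using Aadd[of L] Badd[of L] LM by (simp_all add: n_def)
  have pM: "poch p (p^2) M = B M * A M" using poch_sq[of q p M] by (simp add: p_def A_def B_def)
  have csq: "poch (c^2) (p^2) L = poch c p L * poch (-c) p L" by (rule poch_sq)
  have sgn: "(-1::complex)^M * (-1)^n = (-1)^L"
  proof -
    have "M + n = L + 2*n" using LM by (simp add: n_def)
    hence "(-1::complex)^M * (-1)^n = (-1)^L * ((-1)^2)^n" by (metis power_add power_mult)
    thus ?thesis by simp
  qed
  have "(-1)^M * ((-1)^n * (A n / B n)) * poch p (p^2) L * poch p (p^2) M
      = ((-1)^M * (-1)^n) * A n * (B M / B n) * A M * poch p (p^2) L"
    unfolding pM by (simp add: field_simps)
  also have "\<dots> = (-1)^L * (A n)^2 * (poch (c^2) (p^2) L * poch p (p^2) L)"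
    unfolding sgn csq BM AM using Bnz by (simp add: power2_eq_square field_simps)
  finally show ?thesis using LHS rat by (simp add: p_def)
qed

lemma case2:
  fixes q :: complex
  assumes q: "norm q < 1" "q \<noteq> 0" and hML: "M \<le> L"
  shows "(\<Sum>k\<le>2*L. \<Sum>l\<le>2*M. (-1)^L * (-1)^k * q ^ nat ((int L - int k + (int M - int l))^2)
            * qb (q^2) (2*L) k * qb (q^2) (2*M) l)
       = (-1)^M * (qpoch q (q^2) (int L - int M) / qpoch (-q) (q^2) (int L - int M))
         * poch (q^2) ((q^2)^2) L * poch (q^2) ((q^2)^2) M"
proof -
  define p where "p = q^2"
  define n where "n = L - M"
  define A where "A = poch (-q) p"
  define B where "B = poch q p"
  define c where "c = q * p^n"
  have pn: "norm p < 1" using q by (simp add: p_def norm_power power_less_one_iff)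
  have Aadd: "A (n + r) = A n * poch (-c) p r" for r by (simp add: A_def c_def poch_add)
  have Badd: "B (n + r) = B n * poch c p r" for r by (simp add: B_def c_def poch_add)
  have Anz: "A n \<noteq> 0" unfolding A_def by (rule poch_nz) (use q pn in auto)
  have "(\<Sum>k\<le>2*L. \<Sum>l\<le>2*M. (-1)^L * (-1)^k * q ^ nat ((int L - int k + (int M - int l))^2)
            * qb p (2*L) k * qb p (2*M) l)
      = (\<Sum>l\<le>2*M. \<Sum>k\<le>2*L. (-1)^L * (-1)^k * q ^ nat ((int L - int k + (int M - int l))^2)
            * qb p (2*L) k * qb p (2*M) l)" by (rule sum.swap)
  also have "\<dots> = (\<Sum>l\<le>2*M. (-1)^L * qb p (2*M) l *
           (\<Sum>k\<le>2*L. (-1)^k * qb p (2*L) k * q ^ nat ((int (L+M-l) - int k)^2)))"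
  proof (intro sum.cong refl)
    fix l assume l: "l \<in> {..2*M}"
    have e: "int L - int k + (int M - int l) = int (L+M-l) - int k" for k using l hML by auto
    show "(\<Sum>k\<le>2*L. (-1)^L * (-1)^k * q ^ nat ((int L - int k + (int M - int l))^2)
            * qb p (2*L) k * qb p (2*M) l)
        = (-1)^L * qb p (2*M) l * (\<Sum>k\<le>2*L. (-1)^k * qb p (2*L) k * q ^ nat ((int (L+M-l) - int k)^2))"
      unfolding e sum_distrib_left by (rule sum.cong) (simp_all add: mult_ac)
  qed
  also have "\<dots> = (\<Sum>l\<le>2*M. (-1)^L * qb p (2*M) l * ((-1)^(L+M-l) * (B (L+M-l) * B (2*L - (L+M-l)))))"
  proof (intro sum.cong refl)
    fix l assume l: "l \<in> {..2*M}"
    have "L+M-l \<le> 2*L" using hML by auto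
    from jtp_neg[OF q this] show "(-1)^L * qb p (2*M) l * (\<Sum>k\<le>2*L. (-1)^k * qb p (2*L) k * q ^ nat ((int (L+M-l) - int k)^2))
        = (-1)^L * qb p (2*M) l * ((-1)^(L+M-l) * (B (L+M-l) * B (2*L - (L+M-l))))"
      by (simp add: p_def B_def)
  qed
  also have "\<dots> = ((-1)^L * (-1)^(L+M)) * (B n)^2 * (\<Sum>l\<le>2*M. (-1)^l * qb p (2*M) l * poch c p l * poch c p (2*M-l))"
    unfolding sum_distrib_left
  proof (intro sum.cong refl)
    fix l assume l: "l \<in> {..2*M}"
    have "L+M-l = n + (2*M-l)" "2*L - (L+M-l) = n + l" using l hML by (auto simp: n_def)
    moreover have "(-1::complex)^(L+M-l) = (-1)^(L+M) * (-1)^l" using l hML by (intro neg1_diff) auto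
    ultimately show "(-1)^L * qb p (2*M) l * ((-1)^(L+M-l) * (B (L+M-l) * B (2*L - (L+M-l))))
        = ((-1)^L * (-1)^(L+M)) * (B n)^2 * ((-1)^l * qb p (2*M) l * poch c p l * poch c p (2*M-l))"
      by (simp add: Badd power2_eq_square mult_ac)
  qed
  also have "\<dots> = ((-1)^L * (-1)^(L+M)) * (B n)^2 * (poch (c^2) (p^2) M * poch p (p^2) M)"
    using phi[OF pn] by simp
  also have "(-1::complex)^L * (-1)^(L+M) = (-1)^M"
  proof -
    have "(-1::complex)^L * (-1)^(L+M) = ((-1)^2)^L * (-1)^M" by (simp add: power_add power_mult[symmetric] mult_2)
    thus ?thesis by simp
  qed
  finally have LHS: "(\<Sum>k\<le>2*L. \<Sum>l\<le>2*M. (-1)^L * (-1)^k * q ^ nat ((int L - int k + (int M - int l))^2)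
            * qb p (2*L) k * qb p (2*M) l) = (-1)^M * (B n)^2 * (poch (c^2) (p^2) M * poch p (p^2) M)" .
  have ilm: "int L - int M = int n" using hML by (simp add: n_def)
  have rat: "qpoch q (q^2) (int L - int M) / qpoch (-q) (q^2) (int L - int M) = B n / A n"
    unfolding ilm qpoch_nat by (simp add: A_def B_def p_def)
  have AL: "A L = A n * poch (-c) p M" and BL: "B L = B n * poch c p M"
    using Aadd[of M] Badd[of M] hML by (simp_all add: n_def)
  have pL: "poch p (p^2) L = B L * A L" using poch_sq[of q p L] by (simp add: p_def A_def B_def)
  have csq: "poch (c^2) (p^2) M = poch c p M * poch (-c) p M" by (rule poch_sq)
  have "(-1)^M * (B n / A n) * poch p (p^2) L * poch p (p^2) M
      = (-1)^M * (B n) * (A L / A n) * B L * poch p (p^2) M"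
    unfolding pL by (simp add: field_simps)
  also have "\<dots> = (-1)^M * (B n)^2 * (poch (c^2) (p^2) M * poch p (p^2) M)"
    unfolding csq BL AL using Anz by (simp add: power2_eq_square field_simps)
  finally show ?thesis using LHS rat by (simp add: p_def)
qed

theorem mainTheorem2:
  fixes q :: complex and L M :: nat
  assumes "norm q < 1" and "q \<noteq> 0"
  shows "(\<Sum>\<^sub>\<infinity>(i,j)\<in>(UNIV :: (int \<times> int) set).
            (-1) powi i * q ^ nat ((i + j)^2)
            * gauss_binom (q^2) (2 * int L) (int L - i)
            * gauss_binom (q^2) (2 * int M) (int M - j))
       = (-1) ^ M * (qpoch q (q^2) (int L - int M) / qpoch (-q) (q^2) (int L - int M))
         * qpoch (q^2) (q^4) (int L) * qpoch (q^2) (q^4) (int M)"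
proof -
  have q: "norm q < 1" "q \<noteq> 0" using assms by auto
  define p where "p = q^2"
  have p4: "q^4 = p^2" by (simp add: p_def power_mult[symmetric])
  define E where "E = (\<lambda>i j. (-1) powi i * q ^ nat ((i + j)^2)
            * gauss_binom (q^2) (2 * int L) (int L - i)
            * gauss_binom (q^2) (2 * int M) (int M - j))"
  define S where "S = (\<Sum>k\<le>2*L. \<Sum>l\<le>2*M. (-1)^L * (-1)^k * q ^ nat ((int L - int k + (int M - int l))^2)
            * qb p (2*L) k * qb p (2*M) l)"
  have "(\<Sum>\<^sub>\<infinity>(i,j)\<in>(UNIV :: (int \<times> int) set). E i j)
      = (\<Sum>\<^sub>\<infinity>(i,j)\<in>{- int L..int L} \<times> {- int M..int M}. E i j)"
    by (rule infsum_cong_neutral) (auto simp: E_def dest!: gb_nz)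
  also have "\<dots> = (\<Sum>(i,j)\<in>{- int L..int L} \<times> {- int M..int M}. E i j)" by simp
  also have "\<dots> = (\<Sum>i\<in>{- int L..int L}. \<Sum>j\<in>{- int M..int M}. E i j)"
    by (simp add: sum.cartesian_product)
  also have "\<dots> = (\<Sum>k\<le>2*L. \<Sum>l\<le>2*M. E (int L - int k) (int M - int l))"
    by (simp add: reindex_int)
  also have "\<dots> = S" unfolding S_def
  proof (intro sum.cong refl)
    fix k l assume k: "k \<in> {..2*L}" and l: "l \<in> {..2*M}"
    show "E (int L - int k) (int M - int l) = (-1)^L * (-1)^k * q ^ nat ((int L - int k + (int M - int l))^2)
            * qb p (2*L) k * qb p (2*M) l"
      using k l by (simp add: E_def gb2 neg1_powi p_def)
  qed
  finally have LS: "(\<Sum>\<^sub>\<infinity>(i,j)\<in>(UNIV :: (int \<times> int) set). E i j) = S" .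
  have q4: "q^4 = (q^2)^2" by (simp add: power_mult[symmetric])
  have "S = (-1)^M * (qpoch q (q^2) (int L - int M) / qpoch (-q) (q^2) (int L - int M))
         * poch (q^2) ((q^2)^2) L * poch (q^2) ((q^2)^2) M"
  proof (cases "L \<le> M")
    case True thus ?thesis unfolding S_def p_def by (rule case1[OF q])
  next
    case False thus ?thesis unfolding S_def p_def by (intro case2[OF q]) auto
  qed
  hence "(\<Sum>\<^sub>\<infinity>(i,j)\<in>(UNIV :: (int \<times> int) set). E i j) = (-1) ^ M * (qpoch q (q^2) (int L - int M) / qpoch (-q) (q^2) (int L - int M))
         * qpoch (q^2) (q^4) (int L) * qpoch (q^2) (q^4) (int M)"
    unfolding LS q4 qpoch_nat .
  thus ?thesis unfolding E_def .
qed

end
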